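(* Let $d\geq1$ and let $f:[0,1]^d\to\mathbb{R}_+$ be the function computed by some ReLU net with input dimension $d$, output dimension $1$ and arbitrary width. Then there exist affine functions $g_\alpha,h_\beta:[0,1]^d\to\mathbb{R}$ ($1\leq\alpha\leq N$, $1\leq\beta\leq M$) such that $f$ can be written as the difference of positive convex functions $$f=g-h,\qquad g:=\max_{1\leq\alpha\leq N}g_\alpha,\qquad h:=\max_{1\leq\beta\leq M}h_\beta.$$ Moreover, there exists a ReLU net $\mathcal N$ with input dimension $d$, hidden layer width $d+3$, output dimension $1$ and $\mathrm{depth}(\mathcal N)=2(M+N)$ that computes $f$ exactly on $[0,1]^d$. Finally, if $f$ is convex (so that $h$ vanishes and $f=\max_{1\leq\alpha\leq N}g_\alpha$), then the width of $\mathcal N$ can be taken to be $d+1$ and the depth can be taken to be $N$.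
   Context: For $m\geq1$, $\mathrm{ReLU}(x_1,\dots,x_m)=(\max\{0,x_1\},\dots,\max\{0,x_m\})$. A feed-forward ReLU net $\mathcal N$ with input dimension $d_{\mathrm{in}}$, hidden layer width $w$, depth $n$ and output dimension $d_{\mathrm{out}}$ is a function of the form $f_{\mathcal N}=\mathrm{ReLU}\circ A_n\circ\mathrm{ReLU}\circ A_{n-1}\circ\cdots\circ\mathrm{ReLU}\circ A_1$, mapping $\mathbb{R}^{d_{\mathrm{in}}}$ to $\mathbb{R}_+^{d_{\mathrm{out}}}$, where $A_1:\mathbb{R}^{d_{\mathrm{in}}}\to\mathbb{R}^w$, $A_j:\mathbb{R}^w\to\mathbb{R}^w$ ($2\leq j\leq n-1$), $A_n:\mathbb{R}^w\to\mathbb{R}^{d_{\mathrm{out}}}$ are affine maps. *)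

theory Defs
  imports Main "HOL-Library.Extended_Real"
begin

text \<open>Vectors of R^m are represented as functions nat => real; only the coordinates
  i < m are meaningful. An affine map R^m -> R^k is given by a weight matrix W and a bias b.\<close>

type_synonym layer = "(nat \<Rightarrow> nat \<Rightarrow> real) \<times> (nat \<Rightarrow> real)"

definition affine_map :: "nat \<Rightarrow> nat \<Rightarrow> layer \<Rightarrow> (nat \<Rightarrow> real) \<Rightarrow> (nat \<Rightarrow> real)" where
  "affine_map m k L x = (\<lambda>i. if i < k then (\<Sum>j<m. fst L i j * x j) + snd L i else 0)"

definition relu :: "(nat \<Rightarrow> real) \<Rightarrow> (nat \<Rightarrow> real)" where
  "relu v = (\<lambda>i. max 0 (v i))"

fun eval_net :: "nat \<Rightarrow> nat \<Rightarrow> nat \<Rightarrow> layer list \<Rightarrow> (nat \<Rightarrow> real) \<Rightarrow> (nat \<Rightarrow> real)" where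
  "eval_net m w dout [] x = x"
| "eval_net m w dout [L] x = relu (affine_map m dout L x)"
| "eval_net m w dout (L # L' # Ls) x = eval_net w w dout (L' # Ls) (relu (affine_map m w L x))"

definition unit_cube :: "nat \<Rightarrow> (nat \<Rightarrow> real) set" where
  "unit_cube d = {x. (\<forall>i<d. 0 \<le> x i \<and> x i \<le> 1) \<and> (\<forall>i\<ge>d. x i = 0)}"

definition relu_net_computes :: "nat \<Rightarrow> nat \<Rightarrow> nat \<Rightarrow> ((nat \<Rightarrow> real) \<Rightarrow> real) \<Rightarrow> bool" where
  "relu_net_computes d w n f \<longleftrightarrow>
     (\<exists>Ls. length Ls = n \<and> n \<ge> 1 \<and> (\<forall>x\<in>unit_cube d. f x = eval_net d w 1 Ls x 0))"

definition affine_fun :: "nat \<Rightarrow> (nat \<Rightarrow> real) \<Rightarrow> real \<Rightarrow> (nat \<Rightarrow> real) \<Rightarrow> real" where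
  "affine_fun d a c x = (\<Sum>i<d. a i * x i) + c"

definition max_affine :: "nat \<Rightarrow> nat \<Rightarrow> (nat \<Rightarrow> nat \<Rightarrow> real) \<Rightarrow> (nat \<Rightarrow> real) \<Rightarrow> (nat \<Rightarrow> real) \<Rightarrow> real" where
  "max_affine d N a c x = Max ((\<lambda>\<alpha>. affine_fun d (a \<alpha>) (c \<alpha>) x) ` {1..N})"

definition convex_on_cube :: "nat \<Rightarrow> ((nat \<Rightarrow> real) \<Rightarrow> real) \<Rightarrow> bool" where
  "convex_on_cube d f \<longleftrightarrow> (\<forall>x\<in>unit_cube d. \<forall>y\<in>unit_cube d. \<forall>t::real. 0 \<le> t \<and> t \<le> 1 \<longrightarrow>
      f (\<lambda>i. t * x i + (1 - t) * y i) \<le> t * f x + (1 - t) * f y)"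

end

theory Submission
  imports Defs
begin

type_synonym piece = "(nat \<Rightarrow> real) \<times> real"

definition aff :: "nat \<Rightarrow> piece \<Rightarrow> (nat \<Rightarrow> real) \<Rightarrow> real" where
  "aff d p x = (\<Sum>i<d. fst p i * x i) + snd p"

definition mx :: "nat \<Rightarrow> piece list \<Rightarrow> (nat \<Rightarrow> real) \<Rightarrow> real" where
  "mx d ps x = Max ((\<lambda>p. aff d p x) ` set ps)"

lemma mx_ge: "p \<in> set ps \<Longrightarrow> aff d p x \<le> mx d ps x"
  unfolding mx_def by (rule Max_ge) auto

lemma mx_attained: "ps \<noteq> [] \<Longrightarrow> \<exists>p\<in>set ps. mx d ps x = aff d p x"
proof -
  assume "ps \<noteq> []"
  then have "mx d ps x \<in> (\<lambda>p. aff d p x) ` set ps" unfolding mx_def by (intro Max_in) auto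
  then show ?thesis by auto
qed

lemma mx_le: "ps \<noteq> [] \<Longrightarrow> (\<And>p. p \<in> set ps \<Longrightarrow> aff d p x \<le> B) \<Longrightarrow> mx d ps x \<le> B"
  using mx_attained by metis

lemma mx_eq: "p \<in> set ps \<Longrightarrow> (\<And>p'. p' \<in> set ps \<Longrightarrow> aff d p' x \<le> aff d p x) \<Longrightarrow> mx d ps x = aff d p x"
  by (metis antisym empty_iff empty_set mx_ge mx_le)

lemma mx_set: "set ps = set qs \<Longrightarrow> mx d ps x = mx d qs x"
  unfolding mx_def by simp

lemma mx_single: "mx d [p] x = aff d p x"
  unfolding mx_def by simp

lemma mx_append: "ps \<noteq> [] \<Longrightarrow> qs \<noteq> [] \<Longrightarrow> mx d (ps @ qs) x = max (mx d ps x) (mx d qs x)"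
  unfolding mx_def by (simp add: image_Un Max_Un)

lemma mx_cons: "ps \<noteq> [] \<Longrightarrow> mx d (p # ps) x = max (aff d p x) (mx d ps x)"
  using mx_append[of "[p]" ps d x] by (simp add: mx_single)

lemma mx_map_mono:
  assumes "ps \<noteq> []" "mono T" "\<And>p. aff d (tp p) x = T (aff d p x)"
  shows "mx d (map tp ps) x = T (mx d ps x)"
proof (rule antisym)
  show "mx d (map tp ps) x \<le> T (mx d ps x)"
    using assms by (auto intro!: mx_le monoD[OF assms(2)] mx_ge)
  obtain p where "p \<in> set ps" "mx d ps x = aff d p x" using mx_attained[OF assms(1)] by blast
  then show "T (mx d ps x) \<le> mx d (map tp ps) x"
    using assms(3) by (metis image_eqI list.set_map mx_ge)
qed

definition padd :: "piece \<Rightarrow> piece \<Rightarrow> piece" where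
  "padd p q = (\<lambda>i. fst p i + fst q i, snd p + snd q)"
definition pscale :: "real \<Rightarrow> piece \<Rightarrow> piece" where
  "pscale c p = (\<lambda>i. c * fst p i, c * snd p)"
definition pshift :: "real \<Rightarrow> piece \<Rightarrow> piece" where
  "pshift K p = (fst p, snd p + K)"
definition pdiff :: "piece \<Rightarrow> piece \<Rightarrow> piece" where
  "pdiff p q = (\<lambda>i. fst p i - fst q i, snd p - snd q)"

lemma aff_padd: "aff d (padd p q) x = aff d p x + aff d q x"
  unfolding aff_def padd_def by (simp add: distrib_right sum.distrib)
lemma aff_pscale: "aff d (pscale c p) x = c * aff d p x"
  unfolding aff_def pscale_def by (simp add: distrib_left sum_distrib_left mult.assoc)
lemma aff_pshift: "aff d (pshift K p) x = aff d p x + K"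
  unfolding aff_def pshift_def by simp
lemma aff_pdiff: "aff d (pdiff p q) x = aff d p x - aff d q x"
  unfolding aff_def pdiff_def by (simp add: left_diff_distrib sum_subtractf)

definition psum :: "piece list \<Rightarrow> piece list \<Rightarrow> piece list" where
  "psum ps qs = concat (map (\<lambda>p. map (padd p) qs) ps)"

lemma psum_ne: "ps \<noteq> [] \<Longrightarrow> qs \<noteq> [] \<Longrightarrow> psum ps qs \<noteq> []"
  unfolding psum_def by (cases ps; cases qs) auto

lemma mx_psum:
  assumes "ps \<noteq> []" "qs \<noteq> []"
  shows "mx d (psum ps qs) x = mx d ps x + mx d qs x"
proof (rule antisym)
  show "mx d (psum ps qs) x \<le> mx d ps x + mx d qs x"
    by (rule mx_le[OF psum_ne[OF assms]]) (auto simp: psum_def aff_padd intro!: add_mono mx_ge)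
  obtain p where p: "p \<in> set ps" "mx d ps x = aff d p x" using mx_attained[OF assms(1)] by blast
  obtain q where q: "q \<in> set qs" "mx d qs x = aff d q x" using mx_attained[OF assms(2)] by blast
  have "padd p q \<in> set (psum ps qs)" using p q by (auto simp: psum_def)
  then show "mx d ps x + mx d qs x \<le> mx d (psum ps qs) x"
    using p q by (metis aff_padd mx_ge)
qed

definition DC :: "nat \<Rightarrow> ((nat \<Rightarrow> real) \<Rightarrow> real) \<Rightarrow> bool" where
  "DC d \<phi> \<longleftrightarrow> (\<exists>ps qs. ps \<noteq> [] \<and> qs \<noteq> [] \<and> (\<forall>x. \<phi> x = mx d ps x - mx d qs x))"

lemma DC_const: "DC d (\<lambda>x. c)"
  unfolding DC_def
  by (rule exI[of _ "[(\<lambda>_. 0, c)]"], rule exI[of _ "[(\<lambda>_. 0, 0)]"]) (simp add: mx_single aff_def)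

lemma sum_delta_mult: "(\<Sum>i<(d::nat). (if i = j then 1 else 0) * (x i::real)) = (if j < d then x j else 0)"
proof -
  have "(\<Sum>i<d. (if i = j then 1 else 0) * x i) = (\<Sum>i<d. if i = j then x i else 0)"
    by (rule sum.cong) auto
  then show ?thesis by (simp add: sum.delta)
qed

lemma DC_coord: "j < d \<Longrightarrow> DC d (\<lambda>x. x j)"
  unfolding DC_def
  by (rule exI[of _ "[(\<lambda>i. if i = j then 1 else 0, 0)]"], rule exI[of _ "[(\<lambda>_. 0, 0)]"])
     (simp add: mx_single aff_def sum_delta_mult)

lemma DC_add: "DC d f \<Longrightarrow> DC d g \<Longrightarrow> DC d (\<lambda>x. f x + g x)"
proof -
  assume "DC d f" "DC d g"
  then obtain ps1 qs1 ps2 qs2 where h: "ps1 \<noteq> []" "qs1 \<noteq> []" "ps2 \<noteq> []" "qs2 \<noteq> []"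
    "\<forall>x. f x = mx d ps1 x - mx d qs1 x" "\<forall>x. g x = mx d ps2 x - mx d qs2 x"
    unfolding DC_def by metis
  show ?thesis unfolding DC_def
    by (rule exI[of _ "psum ps1 ps2"], rule exI[of _ "psum qs1 qs2"]) (simp add: h psum_ne mx_psum)
qed

lemma DC_scale: "DC d f \<Longrightarrow> DC d (\<lambda>x. c * f x)"
proof -
  assume "DC d f"
  then obtain ps qs where h: "ps \<noteq> []" "qs \<noteq> []" "\<forall>x. f x = mx d ps x - mx d qs x"
    unfolding DC_def by metis
  show ?thesis
  proof (cases "c \<ge> 0")
    case True
    have m: "mono (\<lambda>t. c * t)" using True by (simp add: mono_def mult_left_mono)
    show ?thesis unfolding DC_def
      by (rule exI[of _ "map (pscale c) ps"], rule exI[of _ "map (pscale c) qs"])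
        (simp add: h mx_map_mono[OF _ m] aff_pscale right_diff_distrib)
  next
    case False
    have m: "mono (\<lambda>t. (-c) * t)" using False by (simp add: mono_def mult_left_mono)
    show ?thesis unfolding DC_def
      by (rule exI[of _ "map (pscale (-c)) qs"], rule exI[of _ "map (pscale (-c)) ps"])
        (simp add: h mx_map_mono[OF _ m] aff_pscale right_diff_distrib)
  qed
qed

lemma DC_relu: "DC d f \<Longrightarrow> DC d (\<lambda>x. max 0 (f x))"
proof -
  assume "DC d f"
  then obtain ps qs where h: "ps \<noteq> []" "qs \<noteq> []" "\<forall>x. f x = mx d ps x - mx d qs x"
    unfolding DC_def by metis
  show ?thesis unfolding DC_def
    by (rule exI[of _ "ps @ qs"], rule exI[of _ "qs"]) (simp add: h mx_append max_def)
qed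

lemma DC_sum: "finite A \<Longrightarrow> (\<And>j. j \<in> A \<Longrightarrow> DC d (f j)) \<Longrightarrow> DC d (\<lambda>x. \<Sum>j\<in>A. f j x)"
proof (induction A rule: finite_induct)
  case empty then show ?case using DC_const[of d 0] by simp
next
  case (insert a A)
  then show ?case using DC_add[of d "f a" "\<lambda>x. \<Sum>j\<in>A. f j x"] by simp
qed

lemma DC_affine: "(\<And>j. j < m \<Longrightarrow> DC d (\<lambda>x. v x j)) \<Longrightarrow> DC d (\<lambda>x. affine_map m k L (v x) i)"
proof (cases "i < k")
  case True
  assume a: "\<And>j. j < m \<Longrightarrow> DC d (\<lambda>x. v x j)"
  have "DC d (\<lambda>x. \<Sum>j<m. fst L i j * v x j)" by (rule DC_sum) (auto intro: DC_scale a)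
  then have "DC d (\<lambda>x. (\<Sum>j<m. fst L i j * v x j) + snd L i)" by (rule DC_add[OF _ DC_const])
  then show ?thesis using True by (simp add: affine_map_def)
next
  case False then show ?thesis by (simp add: affine_map_def DC_const)
qed

lemma DC_net: "Ls \<noteq> [] \<Longrightarrow> (\<And>j. j < m \<Longrightarrow> DC d (\<lambda>x. v x j)) \<Longrightarrow> DC d (\<lambda>x. eval_net m w dout Ls (v x) i)"
proof (induction Ls arbitrary: m v i)
  case Nil then show ?case by simp
next
  case (Cons L Ls)
  show ?case
  proof (cases Ls)
    case Nil
    then show ?thesis using Cons.prems by (simp add: relu_def DC_relu DC_affine)
  next
    case (Cons L' Ls')
    have "DC d (\<lambda>x. eval_net w w dout Ls (relu (affine_map m w L (v x))) i)"
      using Cons by (intro Cons.IH) (auto simp: relu_def intro!: DC_relu DC_affine Cons.prems)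
    then show ?thesis using Cons by simp
  qed
qed

lemma eval_net_nonneg: "Ls \<noteq> [] \<Longrightarrow> 0 \<le> eval_net m w dout Ls x i"
  by (induction m w dout Ls x rule: eval_net.induct) (auto simp: relu_def)


definition firstL :: layer where
  "firstL = (\<lambda>i j. if j = i then 1 else 0, \<lambda>i. 0)"

definition stepL :: "nat \<Rightarrow> nat \<Rightarrow> piece \<Rightarrow> piece \<Rightarrow> layer" where
  "stepL d k q p = (\<lambda>i j. (if j = i then 1 else 0) + (if i = d + k \<and> j < d then fst q j - fst p j else 0),
                    \<lambda>i. if i = d + k then snd q - snd p else 0)"

definition finalL :: "nat \<Rightarrow> (nat \<Rightarrow> piece) \<Rightarrow> layer" where
  "finalL d l = (\<lambda>i j. (if j < d then fst (l 0) j - fst (l 1) j else 0) + (if j = d then 1 else 0)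
                     + (if j = Suc d then -1 else 0),
                 \<lambda>i. snd (l 0) - snd (l 1))"

fun steps :: "nat \<Rightarrow> (nat \<Rightarrow> piece) \<Rightarrow> (nat \<times> piece) list \<Rightarrow> layer list" where
  "steps d l [] = [finalL d l]"
| "steps d l ((k, p) # is) = stepL d k (l k) p # steps d (l(k := p)) is"

fun runP :: "(nat \<times> piece) list \<Rightarrow> (nat \<Rightarrow> piece list) \<Rightarrow> (nat \<Rightarrow> piece list)" where
  "runP [] P = P"
| "runP ((k, p) # is) P = runP is (P(k := p # P k))"

lemma set_runP: "set (runP is P k) = set (P k) \<union> {p. (k, p) \<in> set is}"
proof (induction "is" arbitrary: P)
  case (Cons a "is")
  then show ?case by (cases a) auto
qed simp

lemma runP_ne: "P k \<noteq> [] \<Longrightarrow> runP is P k \<noteq> []"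
  using set_runP[of "is" P k] by auto

lemma steps_cons: "\<exists>L Ls. steps d l is = L # Ls"
  by (induction d l "is" rule: steps.induct) auto

lemma length_steps: "length (steps d l is) = Suc (length is)"
  by (induction d l "is" rule: steps.induct) (auto simp del: fun_upd_apply)

lemma sum_if_lt: "d \<le> w \<Longrightarrow> (\<Sum>j<w. (if j < d then g j else 0)) = (\<Sum>j<(d::nat). g j)"
proof -
  assume "d \<le> w"
  then have e: "{j \<in> {..<w}. j < d} = {..<d}" by auto
  show ?thesis using sum.inter_filter[of "{..<w}" g "\<lambda>j. j < d", symmetric] e by simp
qed

lemma sum_if_eq: "(\<Sum>j<(w::nat). (if j = i then 1 else 0) * (y j::real)) = (if i < w then y i else 0)"
  by (rule sum_delta_mult)

definition inv :: "nat \<Rightarrow> nat \<Rightarrow> (nat \<Rightarrow> real) \<Rightarrow> (nat \<Rightarrow> real) \<Rightarrow> (nat \<Rightarrow> piece) \<Rightarrow> (nat \<Rightarrow> piece list) \<Rightarrow> bool" where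
  "inv d w x y l P \<longleftrightarrow> (\<forall>i<d. y i = x i) \<and> (\<forall>i. 0 \<le> y i) \<and> (\<forall>i\<ge>w. y i = 0) \<and>
      (\<forall>k<2. P k \<noteq> [] \<and> y (d + k) + aff d (l k) x = mx d (P k) x)"

lemma step_eval:
  assumes "i < w" "d \<le> w"
  shows "affine_map w w (stepL d k q p) y i = y i + (if i = d + k then (\<Sum>j<d. (fst q j - fst p j) * y j) + snd q - snd p else 0)"
proof -
  have "affine_map w w (stepL d k q p) y i =
     (\<Sum>j<w. (if j = i then 1 else 0) * y j) + (\<Sum>j<w. (if i = d + k \<and> j < d then fst q j - fst p j else 0) * y j)
      + (if i = d + k then snd q - snd p else 0)"
    using assms by (simp add: affine_map_def stepL_def distrib_right sum.distrib)
  also have "(\<Sum>j<w. (if i = d + k \<and> j < d then fst q j - fst p j else 0) * y j) =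
       (if i = d + k then (\<Sum>j<w. (if j < d then (fst q j - fst p j) * y j else 0)) else 0)"
    by (cases "i = d + k") (auto intro!: sum.cong)
  also have "(\<Sum>j<w. (if j < d then (fst q j - fst p j) * y j else 0)) = (\<Sum>j<d. (fst q j - fst p j) * y j)"
    by (rule sum_if_lt[OF assms(2)])
  finally show ?thesis using assms by (simp add: sum_if_eq)
qed

lemma final_eval:
  assumes "d < w"
  shows "affine_map w 1 (finalL d l) y 0 = (\<Sum>j<d. (fst (l 0) j - fst (l 1) j) * y j) + y d
      - (if Suc d < w then y (Suc d) else 0) + snd (l 0) - snd (l 1)"
proof -
  have "affine_map w 1 (finalL d l) y 0 =
     (\<Sum>j<w. (if j < d then (fst (l 0) j - fst (l 1) j) * y j else 0)) + (\<Sum>j<w. (if j = d then 1 else 0) * y j)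
      - (\<Sum>j<w. (if j = Suc d then 1 else 0) * y j) + (snd (l 0) - snd (l 1))"
    by (simp add: affine_map_def finalL_def distrib_right sum.distrib sum_subtractf if_distrib[where f="\<lambda>a. a * _"] cong: if_cong)
  then show ?thesis using assms by (simp add: sum_if_lt sum_if_eq)
qed

lemma sum_x: "(\<forall>i<d. y i = x i) \<Longrightarrow> (\<Sum>j<d. (fst q j - fst p j) * y j) = (aff d q x - snd q) - (aff d p x - snd p)"
  unfolding aff_def by (simp add: left_diff_distrib sum_subtractf)

lemma steps_eval:
  assumes "d < w" "inv d w x y l P" "\<forall>(k,p)\<in>set is. k < 2 \<and> d + k < w"
  shows "eval_net w w 1 (steps d l is) y 0 = max 0 (mx d (runP is P 0) x - mx d (runP is P 1) x)"
  using assms(2,3)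
proof (induction "is" arbitrary: y l P)
  case Nil
  have i: "\<forall>i<d. y i = x i" "\<forall>i\<ge>w. y i = 0" "y d + aff d (l 0) x = mx d (P 0) x"
    "y (d + 1) + aff d (l 1) x = mx d (P 1) x"
  proof -
    have h: "\<forall>k<2. P k \<noteq> [] \<and> y (d + k) + aff d (l k) x = mx d (P k) x"
      using Nil.prems(1) unfolding inv_def by auto
    show "y d + aff d (l 0) x = mx d (P 0) x" using h[rule_format, of 0] by simp
    show "y (d + 1) + aff d (l 1) x = mx d (P 1) x" using h[rule_format, of 1] by simp
  qed (use Nil.prems(1) in \<open>auto simp: inv_def\<close>)
  have "(if Suc d < w then y (Suc d) else 0) = y (Suc d)" using i(2) by auto
  then have "affine_map w 1 (finalL d l) y 0 = mx d (P 0) x - mx d (P 1) x"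
    using final_eval[OF assms(1), of l y] sum_x[OF i(1), of "l 0" "l 1"] i(3,4) by simp
  then show ?case by (simp add: relu_def)
next
  case (Cons a "is")
  obtain k p where a: "a = (k, p)" by (cases a)
  have kp: "k < 2" "d + k < w" using Cons.prems(2) a by auto
  have i: "\<forall>i<d. y i = x i" "\<forall>i. 0 \<le> y i" "\<forall>i\<ge>w. y i = 0"
     "\<forall>k<2. P k \<noteq> [] \<and> y (d + k) + aff d (l k) x = mx d (P k) x"
    using Cons.prems(1) unfolding inv_def by auto
  define y' where "y' = relu (affine_map w w (stepL d k (l k) p) y)"
  obtain L Ls where LL: "steps d (l(k := p)) is = L # Ls" using steps_cons by blast
  have ev: "eval_net w w 1 (steps d l (a # is)) y = eval_net w w 1 (steps d (l(k := p)) is) y'"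
    unfolding a y'_def using LL by simp
  have oth: "y' i = y i" if "i \<noteq> d + k" for i
  proof (cases "i < w")
    case True
    then show ?thesis using step_eval[OF True, of d k "l k" p y] assms(1) that i(2)
      by (simp add: y'_def relu_def)
  next
    case False
    then show ?thesis using i(3) by (simp add: y'_def relu_def affine_map_def)
  qed
  have yk: "y' (d + k) = max 0 (mx d (P k) x - aff d p x)"
  proof -
    have "y (d + k) + aff d (l k) x = mx d (P k) x" using i(4) kp by auto
    then show ?thesis using step_eval[OF kp(2), of d k "l k" p y] assms(1) sum_x[OF i(1), of "l k" p]
      by (simp add: y'_def relu_def)
  qed
  have inv': "inv d w x y' (l(k := p)) (P(k := p # P k))"
    unfolding inv_def
  proof (intro conjI allI impI)
    fix i assume "i < d" then show "y' i = x i" using oth i(1) by simp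
  next
    fix i show "0 \<le> y' i" by (simp add: y'_def relu_def)
  next
    fix i assume "w \<le> i" then show "y' i = 0" using oth i(3) kp by simp
  next
    fix k' :: nat assume k': "k' < 2"
    show "(P(k := p # P k)) k' \<noteq> []" using i(4) k' by simp
    show "y' (d + k') + aff d ((l(k := p)) k') x = mx d ((P(k := p # P k)) k') x"
    proof (cases "k' = k")
      case True
      then show ?thesis using yk i(4) k' mx_cons[of "P k" d p x] by (auto simp: max_def)
    next
      case False
      then show ?thesis using oth[of "d + k'"] i(4) k' by simp
    qed
  qed
  have "eval_net w w 1 (steps d (l(k := p)) is) y' 0 =
      max 0 (mx d (runP is (P(k := p # P k)) 0) x - mx d (runP is (P(k := p # P k)) 1) x)"
    using Cons.IH[OF inv'] Cons.prems(2) by (simp add: fun_upd_def)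
  then show ?case using ev a by simp
qed


lemma net_computes:
  assumes "d < w" "\<forall>(k,p)\<in>set is. k < 2 \<and> d + k < w"
    and "\<forall>x\<in>unit_cube d. f x = max 0 (mx d (runP is (\<lambda>k. [l k]) 0) x - mx d (runP is (\<lambda>k. [l k]) 1) x)"
  shows "relu_net_computes d w (length is + 2) f"
  unfolding relu_net_computes_def
proof (intro exI conjI ballI)
  let ?Ls = "firstL # steps d l is"
  show "length ?Ls = length is + 2" by (simp add: length_steps)
  show "1 \<le> length is + 2" by simp
  fix x assume x: "x \<in> unit_cube d"
  define y where "y = relu (affine_map d w firstL x)"
  obtain L Ls where LL: "steps d l is = L # Ls" using steps_cons by blast
  have ev: "eval_net d w 1 ?Ls x = eval_net w w 1 (steps d l is) y"
    unfolding y_def using LL by simp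
  have xc: "\<forall>i<d. 0 \<le> x i" using x by (simp add: unit_cube_def)
  have yv: "y i = (if i < w \<and> i < d then x i else 0)" for i
    using xc assms(1) by (auto simp: y_def relu_def affine_map_def firstL_def sum_delta_mult)
  have "inv d w x y l (\<lambda>k. [l k])"
    unfolding inv_def using yv xc assms(1) by (auto simp: mx_single)
  then have "eval_net w w 1 (steps d l is) y 0 =
     max 0 (mx d (runP is (\<lambda>k. [l k]) 0) x - mx d (runP is (\<lambda>k. [l k]) 1) x)"
    by (rule steps_eval[OF assms(1) _ assms(2)])
  then show "f x = eval_net d w 1 ?Ls x 0" using ev assms(3) x by simp
qed

lemma max_affine_list:
  assumes "ps \<noteq> []"
  shows "max_affine d (length ps) (\<lambda>\<alpha>. fst (ps ! (\<alpha> - 1))) (\<lambda>\<alpha>. snd (ps ! (\<alpha> - 1))) x = mx d ps x"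
proof -
  have "(\<lambda>\<alpha>. ps ! (\<alpha> - 1)) ` {1..length ps} = set ps"
  proof
    show "(\<lambda>\<alpha>. ps ! (\<alpha> - 1)) ` {1..length ps} \<subseteq> set ps" by auto
    show "set ps \<subseteq> (\<lambda>\<alpha>. ps ! (\<alpha> - 1)) ` {1..length ps}"
    proof
      fix p assume "p \<in> set ps"
      then obtain i where "i < length ps" "p = ps ! i" by (auto simp: in_set_conv_nth)
      then show "p \<in> (\<lambda>\<alpha>. ps ! (\<alpha> - 1)) ` {1..length ps}"
        by (intro image_eqI[of _ _ "Suc i"]) auto
    qed
  qed
  moreover have "(\<lambda>\<alpha>. affine_fun d (fst (ps ! (\<alpha> - 1))) (snd (ps ! (\<alpha> - 1))) x) ` {1..length ps}
      = (\<lambda>p. aff d p x) ` ((\<lambda>\<alpha>. ps ! (\<alpha> - 1)) ` {1..length ps})"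
    unfolding image_image by (simp add: aff_def affine_fun_def)
  ultimately have "(\<lambda>\<alpha>. affine_fun d (fst (ps ! (\<alpha> - 1))) (snd (ps ! (\<alpha> - 1))) x) ` {1..length ps}
      = (\<lambda>p. aff d p x) ` set ps" by simp
  then show ?thesis unfolding max_affine_def mx_def by simp
qed

lemma DC_of_net:
  assumes "relu_net_computes d w n f"
  shows "\<exists>ps qs. ps \<noteq> [] \<and> qs \<noteq> [] \<and> (\<forall>x\<in>unit_cube d. f x = mx d ps x - mx d qs x) \<and>
     (\<forall>x\<in>unit_cube d. 0 \<le> f x)"
proof -
  obtain Ls where Ls: "length Ls = n" "n \<ge> 1" "\<forall>x\<in>unit_cube d. f x = eval_net d w 1 Ls x 0"
    using assms unfolding relu_net_computes_def by blast
  have ne: "Ls \<noteq> []" using Ls by auto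
  have "DC d (\<lambda>x. eval_net d w 1 Ls ((\<lambda>x. x) x) 0)"
    by (rule DC_net[OF ne]) (rule DC_coord)
  then obtain ps qs where "ps \<noteq> []" "qs \<noteq> []" "\<forall>x. eval_net d w 1 Ls x 0 = mx d ps x - mx d qs x"
    unfolding DC_def by auto
  moreover have "\<forall>x\<in>unit_cube d. 0 \<le> f x" using Ls(3) eval_net_nonneg[OF ne] by simp
  ultimately show ?thesis using Ls(3) by (intro exI[of _ ps] exI[of _ qs]) simp
qed

lemma aff_lower:
  assumes "x \<in> unit_cube d"
  shows "snd p - (\<Sum>i<d. \<bar>fst p i\<bar>) \<le> aff d p x"
proof -
  have "(\<Sum>i<d. - \<bar>fst p i\<bar>) \<le> (\<Sum>i<d. fst p i * x i)"
  proof (rule sum_mono)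
    fix i assume "i \<in> {..<d}"
    then have "0 \<le> x i" "x i \<le> 1" using assms by (auto simp: unit_cube_def)
    then have "\<bar>fst p i * x i\<bar> \<le> \<bar>fst p i\<bar>"
      by (simp add: abs_mult mult_left_le)
    then show "- \<bar>fst p i\<bar> \<le> fst p i * x i" by linarith
  qed
  then show ?thesis unfolding aff_def by (simp add: sum_negf)
qed

lemma DC_pos:
  assumes "relu_net_computes d w n f"
  shows "\<exists>ps qs. ps \<noteq> [] \<and> qs \<noteq> [] \<and> (\<forall>x\<in>unit_cube d. f x = mx d ps x - mx d qs x
       \<and> 0 \<le> mx d ps x \<and> 0 \<le> mx d qs x \<and> 0 \<le> f x)"
proof -
  obtain ps qs where h: "ps \<noteq> []" "qs \<noteq> []" "\<forall>x\<in>unit_cube d. f x = mx d ps x - mx d qs x"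
     "\<forall>x\<in>unit_cube d. 0 \<le> f x"
    using DC_of_net[OF assms] by blast
  define K where "K = max (\<Sum>i<d. \<bar>fst (hd ps) i\<bar>) 0 - snd (hd ps) + max (\<Sum>i<d. \<bar>fst (hd qs) i\<bar>) 0 - snd (hd qs)
     + \<bar>snd (hd ps)\<bar> + \<bar>snd (hd qs)\<bar>"
  have m: "mono (\<lambda>t. t + K)" by (simp add: mono_def)
  have mk: "mx d (map (pshift K) rs) x = mx d rs x + K" if "rs \<noteq> []" for rs x
    by (rule mx_map_mono[OF that m]) (simp add: aff_pshift)
  have pos: "0 \<le> mx d rs x + K" if "rs \<noteq> []" "hd rs = hd ps \<or> hd rs = hd qs" "x \<in> unit_cube d" for rs x
  proof -
    have "aff d (hd rs) x \<le> mx d rs x" using that(1) by (intro mx_ge) simp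
    moreover have "snd (hd rs) - (\<Sum>i<d. \<bar>fst (hd rs) i\<bar>) \<le> aff d (hd rs) x" by (rule aff_lower[OF that(3)])
    moreover have "0 \<le> (\<Sum>i<d. \<bar>fst (hd ps) i\<bar>)" "0 \<le> (\<Sum>i<d. \<bar>fst (hd qs) i\<bar>)"
      by (auto intro: sum_nonneg)
    moreover have "(\<Sum>i<d. \<bar>fst (hd ps) i\<bar>) \<le> max (\<Sum>i<d. \<bar>fst (hd ps) i\<bar>) 0"
      "(\<Sum>i<d. \<bar>fst (hd qs) i\<bar>) \<le> max (\<Sum>i<d. \<bar>fst (hd qs) i\<bar>) 0"
      "0 \<le> max (\<Sum>i<d. \<bar>fst (hd ps) i\<bar>) 0" "0 \<le> max (\<Sum>i<d. \<bar>fst (hd qs) i\<bar>) 0"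
      "- snd (hd ps) \<le> \<bar>snd (hd ps)\<bar>" "- snd (hd qs) \<le> \<bar>snd (hd qs)\<bar>"
      "snd (hd ps) \<le> \<bar>snd (hd ps)\<bar>" "snd (hd qs) \<le> \<bar>snd (hd qs)\<bar>"
      by auto
    note facts = calculation
    have F: "aff d (hd rs) x \<le> mx d rs x \<and> snd (hd rs) - (\<Sum>i<d. \<bar>fst (hd rs) i\<bar>) \<le> aff d (hd rs) x
      \<and> (\<Sum>i<d. \<bar>fst (hd ps) i\<bar>) \<le> max (\<Sum>i<d. \<bar>fst (hd ps) i\<bar>) 0
      \<and> (\<Sum>i<d. \<bar>fst (hd qs) i\<bar>) \<le> max (\<Sum>i<d. \<bar>fst (hd qs) i\<bar>) 0
      \<and> 0 \<le> max (\<Sum>i<d. \<bar>fst (hd ps) i\<bar>) 0 \<and> 0 \<le> max (\<Sum>i<d. \<bar>fst (hd qs) i\<bar>) 0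
      \<and> - snd (hd ps) \<le> \<bar>snd (hd ps)\<bar> \<and> - snd (hd qs) \<le> \<bar>snd (hd qs)\<bar>
      \<and> snd (hd ps) \<le> \<bar>snd (hd ps)\<bar> \<and> snd (hd qs) \<le> \<bar>snd (hd qs)\<bar>"
      using facts by (intro conjI) auto
    from that(2) show ?thesis
    proof
      assume e: "hd rs = hd ps"
      show ?thesis using F unfolding e K_def by linarith
    next
      assume e: "hd rs = hd qs"
      show ?thesis using F unfolding e K_def by linarith
    qed
  qed
  show ?thesis
    apply (rule exI[of _ "map (pshift K) ps"], rule exI[of _ "map (pshift K) qs"])
    using h pos[of ps] pos[of qs] by (simp add: mk)
qed


definition box :: "nat \<Rightarrow> (nat \<Rightarrow> real) \<Rightarrow> real \<Rightarrow> (nat \<Rightarrow> real) set" where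
  "box d c r = {y. (\<forall>i<d. \<bar>y i - c i\<bar> < r) \<and> (\<forall>i\<ge>d. y i = 0)}"

definition bclosed :: "nat \<Rightarrow> (nat \<Rightarrow> real) set \<Rightarrow> bool" where
  "bclosed d F \<longleftrightarrow> (\<forall>y. (\<forall>i\<ge>d. y i = 0) \<longrightarrow> y \<notin> F \<longrightarrow> (\<exists>s>0. box d y s \<inter> F = {}))"

lemma box_center: "0 < r \<Longrightarrow> (\<lambda>i. if i < d then c i else 0) \<in> box d c r"
  by (simp add: box_def)

lemma cover:
  assumes "finite I"
  shows "0 < r \<Longrightarrow> box d c r \<subseteq> (\<Union>i\<in>I. F i) \<Longrightarrow> (\<forall>i\<in>I. bclosed d (F i)) \<Longrightarrow>
    \<exists>i\<in>I. \<exists>c' r'. 0 < r' \<and> box d c' r' \<subseteq> F i \<and> box d c' r' \<subseteq> box d c r"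
  using assms
proof (induction I arbitrary: c r rule: finite_induct)
  case empty
  then show ?case using box_center[OF empty.prems(1), of d c] by auto
next
  case (insert a I)
  show ?case
  proof (cases "box d c r \<subseteq> F a")
    case True
    then show ?thesis using insert.prems(1) by blast
  next
    case False
    then obtain y where y: "y \<in> box d c r" "y \<notin> F a" by auto
    have y0: "\<forall>i\<ge>d. y i = 0" using y(1) by (simp add: box_def)
    obtain s where s: "s > 0" "box d y s \<inter> F a = {}"
      using insert.prems(3) y0 y(2) unfolding bclosed_def by blast
    define m where "m = Max (insert 0 ((\<lambda>j. \<bar>y j - c j\<bar>) ` {..<d}))"
    have mge: "\<bar>y j - c j\<bar> \<le> m" if "j < d" for j
      unfolding m_def using that by (intro Max_ge) auto
    have mlt: "m < r"
      unfolding m_def using y(1) insert.prems(1) by (subst Max_less_iff) (auto simp: box_def)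
    define r'' where "r'' = min s (r - m)"
    have r'': "0 < r''" using s mlt by (simp add: r''_def)
    have r1: "r'' \<le> r - m" "r'' \<le> s" by (simp_all add: r''_def)
    have sub: "box d y r'' \<subseteq> box d c r"
    proof
      fix z assume z: "z \<in> box d y r''"
      have "\<bar>z j - c j\<bar> < r" if "j < d" for j
      proof -
        have "\<bar>z j - y j\<bar> < r''" using z that by (simp add: box_def)
        then show ?thesis using mge[OF that] r1(1) by linarith
      qed
      then show "z \<in> box d c r" using z by (simp add: box_def)
    qed
    have sub2: "box d y r'' \<subseteq> box d y s"
    proof
      fix z assume "z \<in> box d y r''"
      then show "z \<in> box d y s" using r1(2) by (force simp: box_def)
    qed
    have cov: "box d y r'' \<subseteq> (\<Union>i\<in>I. F i)"
    proof
      fix z assume z: "z \<in> box d y r''"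
      then have "z \<notin> F a" using sub2 s(2) by blast
      moreover have "z \<in> F a \<union> (\<Union>i\<in>I. F i)" using sub z insert.prems(2) by auto
      ultimately show "z \<in> (\<Union>i\<in>I. F i)" by simp
    qed
    have bI: "\<forall>i\<in>I. bclosed d (F i)" using insert.prems(3) by simp
    obtain j c' r' where "j \<in> I" "0 < r'" "box d c' r' \<subseteq> F j" "box d c' r' \<subseteq> box d y r''"
      using insert.IH[OF r'' cov bI] by blast
    then show ?thesis using sub by (meson insert_iff subset_trans)
  qed
qed


definition lip :: "nat \<Rightarrow> piece \<Rightarrow> real" where
  "lip d p = (\<Sum>i<d. \<bar>fst p i\<bar>)"

lemma lip_nonneg: "0 \<le> lip d p"
  unfolding lip_def by (auto intro: sum_nonneg)

lemma aff_lip: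
  assumes "\<forall>i<d. \<bar>z i - y i\<bar> \<le> s"
  shows "\<bar>aff d p z - aff d p y\<bar> \<le> lip d p * s"
proof -
  have "aff d p z - aff d p y = (\<Sum>i<d. fst p i * (z i - y i))"
    unfolding aff_def by (simp add: right_diff_distrib sum_subtractf)
  then have "\<bar>aff d p z - aff d p y\<bar> \<le> (\<Sum>i<d. \<bar>fst p i * (z i - y i)\<bar>)"
    by (simp add: sum_abs)
  also have "\<dots> \<le> (\<Sum>i<d. \<bar>fst p i\<bar> * s)"
    using assms by (intro sum_mono) (simp add: abs_mult mult_left_mono)
  finally show ?thesis by (simp add: lip_def sum_distrib_right)
qed

definition lipL :: "nat \<Rightarrow> piece list \<Rightarrow> real" where
  "lipL d ps = (\<Sum>p\<in>set ps. lip d p)"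

lemma lip_le_lipL: "p \<in> set ps \<Longrightarrow> lip d p \<le> lipL d ps"
  unfolding lipL_def by (rule member_le_sum) (auto simp: lip_nonneg)

lemma lipL_nonneg: "0 \<le> lipL d ps"
  unfolding lipL_def by (auto intro: sum_nonneg lip_nonneg)

lemma mx_lip_half:
  assumes "ps \<noteq> []" "\<forall>i<d. \<bar>z i - y i\<bar> \<le> s" "0 \<le> s"
  shows "mx d ps z - mx d ps y \<le> lipL d ps * s"
proof -
  obtain p where p: "p \<in> set ps" "mx d ps z = aff d p z" using mx_attained[OF assms(1)] by blast
  have "aff d p y \<le> mx d ps y" by (rule mx_ge[OF p(1)])
  moreover have "aff d p z - aff d p y \<le> lip d p * s" using aff_lip[OF assms(2), of p] by auto
  moreover have "lip d p * s \<le> lipL d ps * s" using lip_le_lipL[OF p(1)] assms(3) by (rule mult_right_mono)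
  ultimately show ?thesis using p by linarith
qed

lemma mx_lip:
  assumes "ps \<noteq> []" "\<forall>i<d. \<bar>z i - y i\<bar> \<le> s" "0 \<le> s"
  shows "\<bar>mx d ps z - mx d ps y\<bar> \<le> lipL d ps * s"
proof -
  have yz: "\<forall>i<d. \<bar>y i - z i\<bar> \<le> s" using assms(2) by (simp add: abs_minus_commute)
  show ?thesis using mx_lip_half[OF assms] mx_lip_half[OF assms(1) yz assms(3)] by auto
qed

lemma bclosed_le: "bclosed d {y. aff d u y \<le> aff d v y}"
  unfolding bclosed_def
proof (intro allI impI)
  fix y :: "nat \<Rightarrow> real"
  assume "y \<notin> {y. aff d u y \<le> aff d v y}"
  then have g: "0 < aff d u y - aff d v y" by simp
  define L where "L = lip d u + lip d v"
  have L: "0 \<le> L" unfolding L_def using lip_nonneg by (simp add: add_nonneg_nonneg)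
  define s where "s = (aff d u y - aff d v y) / (L + 1)"
  have s: "0 < s" using g L by (simp add: s_def)
  have sL: "L * s < aff d u y - aff d v y"
  proof -
    have "(L + 1) * s = aff d u y - aff d v y" using L by (simp add: s_def)
    then show ?thesis using s by (simp add: distrib_right)
  qed
  have "box d y s \<inter> {y. aff d u y \<le> aff d v y} = {}"
  proof (rule ccontr)
    assume "box d y s \<inter> {y. aff d u y \<le> aff d v y} \<noteq> {}"
    then obtain z where z: "z \<in> box d y s" "aff d u z \<le> aff d v z" by auto
    have zs: "\<forall>i<d. \<bar>z i - y i\<bar> \<le> s" using z(1) by (auto simp: box_def less_imp_le)
    have "\<bar>aff d u z - aff d u y\<bar> \<le> lip d u * s" "\<bar>aff d v z - aff d v y\<bar> \<le> lip d v * s"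
      using aff_lip[OF zs] by auto
    moreover have "L * s = lip d u * s + lip d v * s" unfolding L_def by (simp add: distrib_right)
    ultimately show False using z(2) sL by linarith
  qed
  then show "\<exists>s>0. box d y s \<inter> {y. aff d u y \<le> aff d v y} = {}" using s by blast
qed

lemma bclosed_Int: "bclosed d A \<Longrightarrow> bclosed d B \<Longrightarrow> bclosed d (A \<inter> B)"
  unfolding bclosed_def
proof (intro allI impI)
  fix y :: "nat \<Rightarrow> real"
  assume a: "\<forall>y. (\<forall>i\<ge>d. y i = 0) \<longrightarrow> y \<notin> A \<longrightarrow> (\<exists>s>0. box d y s \<inter> A = {})"
    and b: "\<forall>y. (\<forall>i\<ge>d. y i = 0) \<longrightarrow> y \<notin> B \<longrightarrow> (\<exists>s>0. box d y s \<inter> B = {})"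
    and y: "\<forall>i\<ge>d. y i = 0" "y \<notin> A \<inter> B"
  show "\<exists>s>0. box d y s \<inter> (A \<inter> B) = {}"
  proof (cases "y \<in> A")
    case True
    then have "y \<notin> B" using y by simp
    then obtain s where "s > 0" "box d y s \<inter> B = {}" using b y(1) by blast
    then show ?thesis by (intro exI[of _ s]) auto
  next
    case False
    then obtain s where "s > 0" "box d y s \<inter> A = {}" using a y(1) by blast
    then show ?thesis by (intro exI[of _ s]) auto
  qed
qed

lemma bclosed_INT:
  assumes a: "\<And>u. u \<in> S \<Longrightarrow> bclosed d (A u)"
  shows "bclosed d (\<Inter>u\<in>S. A u)"
  unfolding bclosed_def
proof (intro allI impI)
  fix y :: "nat \<Rightarrow> real"
  assume y: "\<forall>i\<ge>d. y i = 0" "y \<notin> (\<Inter>u\<in>S. A u)"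
  then obtain u where u: "u \<in> S" "y \<notin> A u" by blast
  then obtain s where "s > 0" "box d y s \<inter> A u = {}" using a[OF u(1)] y(1) unfolding bclosed_def by blast
  then show "\<exists>s>0. box d y s \<inter> (\<Inter>u\<in>S. A u) = {}" using u(1) by (intro exI[of _ s]) auto
qed

lemma aff_comb: "aff d u (\<lambda>i. t * z i + (1 - t) * w i) = t * aff d u z + (1 - t) * aff d u w"
proof -
  have "(\<Sum>i<d. fst u i * (t * z i + (1 - t) * w i)) = (\<Sum>i<d. t * (fst u i * z i) + (1 - t) * (fst u i * w i))"
    by (rule sum.cong) (auto simp: algebra_simps)
  also have "\<dots> = t * (\<Sum>i<d. fst u i * z i) + (1 - t) * (\<Sum>i<d. fst u i * w i)"
    by (simp add: sum.distrib sum_distrib_left)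
  finally show ?thesis unfolding aff_def by (simp add: algebra_simps)
qed

lemma support:
  assumes conv: "convex_on_cube d f" and y0: "y0 \<in> unit_cube d" "\<forall>i<d. y0 i = c i"
    and r: "0 < r" and bc: "box d c r \<subseteq> unit_cube d" and eq: "\<forall>z\<in>box d c r. f z = aff d u z"
    and z: "z \<in> unit_cube d"
  shows "aff d u z \<le> f z"
proof -
  define t where "t = min (r / 2) (1 / 2)"
  have t: "0 < t" "t < r" "t \<le> 1" using r by (auto simp: t_def)
  define q where "q = (\<lambda>i. t * z i + (1 - t) * y0 i)"
  have qb: "q \<in> box d c r"
    unfolding box_def
  proof (intro CollectI conjI allI impI)
    fix i assume i: "i < d"
    have "0 \<le> z i" "z i \<le> 1" "0 \<le> y0 i" "y0 i \<le> 1" using z y0(1) i by (auto simp: unit_cube_def)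
    then have "\<bar>z i - y0 i\<bar> \<le> 1" by linarith
    then have tt: "t * \<bar>z i - y0 i\<bar> \<le> t" using t by (simp add: mult_left_le)
    have "q i - c i = t * (z i - y0 i)" using y0(2) i by (simp add: q_def algebra_simps)
    then have "\<bar>q i - c i\<bar> = t * \<bar>z i - y0 i\<bar>" using t by (simp add: abs_mult)
    then show "\<bar>q i - c i\<bar> < r" using tt t by linarith
  next
    fix i assume "d \<le> i" then show "q i = 0" using z y0(1) by (simp add: q_def unit_cube_def)
  qed
  have y0b: "y0 \<in> box d c r" using y0 r by (simp add: box_def unit_cube_def)
  have "f q \<le> t * f z + (1 - t) * f y0"
    using conv z y0(1) t(1,3) unfolding convex_on_cube_def q_def by (simp add: less_imp_le)
  moreover have "f q = t * aff d u z + (1 - t) * aff d u y0"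
  proof -
    have "f q = aff d u q" using eq qb by blast
    then show ?thesis unfolding q_def by (simp only: aff_comb)
  qed
  moreover have "f y0 = aff d u y0" using eq y0b by auto
  ultimately have "t * aff d u z \<le> t * f z" by simp
  then show ?thesis using t by simp
qed


lemma convex_rep:
  assumes ne: "ps \<noteq> []" "qs \<noteq> []"
    and eqf: "\<forall>x\<in>unit_cube d. f x = mx d ps x - mx d qs x"
    and conv: "convex_on_cube d f"
  shows "\<exists>rs. rs \<noteq> [] \<and> (\<forall>x\<in>unit_cube d. f x = mx d rs x)"
proof -
  define R where "R p q = (\<Inter>p'\<in>set ps. {y. aff d p' y \<le> aff d p y}) \<inter> (\<Inter>q'\<in>set qs. {y. aff d q' y \<le> aff d q y})" for p q
  define V where "V = {u \<in> (\<lambda>(p, q). pdiff p q) ` (set ps \<times> set qs). \<forall>z\<in>unit_cube d. aff d u z \<le> f z}"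
  have finV: "finite V" unfolding V_def by auto
  have bcl: "bclosed d (R p q)" for p q
    unfolding R_def by (intro bclosed_Int bclosed_INT bclosed_le)
  have C1: "\<exists>u\<in>V. \<exists>y\<in>unit_cube d. (\<forall>i<d. \<bar>y i - x i\<bar> < \<epsilon>) \<and> aff d u y = f y"
    if x: "x \<in> unit_cube d" and e: "0 < \<epsilon>" for x \<epsilon>
  proof -
    define t where "t = min \<epsilon> 1"
    have t: "0 < t" "t \<le> 1" "t \<le> \<epsilon>" using e by (auto simp: t_def)
    define c where "c = (\<lambda>i. (1 - t) * x i + t / 2)"
    define r where "r = t / 2"
    have r: "0 < r" using t by (simp add: r_def)
    have xi: "0 \<le> x i" "x i \<le> 1" if "i < d" for i using x that by (auto simp: unit_cube_def)
    have ci: "t / 2 \<le> c i" "c i \<le> 1 - t / 2" "\<bar>c i - x i\<bar> \<le> t / 2" if "i < d" for i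
    proof -
      have "0 \<le> (1 - t) * x i" using t xi[OF that] by simp
      then show "t / 2 \<le> c i" by (simp add: c_def)
      have "(1 - t) * x i \<le> 1 - t" using t xi[OF that] by (simp add: mult_left_le)
      then show "c i \<le> 1 - t / 2" by (simp add: c_def)
      have "c i - x i = t * (1 / 2 - x i)" by (simp add: c_def algebra_simps)
      moreover have "\<bar>1 / 2 - x i\<bar> \<le> 1 / 2" using xi[OF that] by linarith
      ultimately show "\<bar>c i - x i\<bar> \<le> t / 2" using t by (simp add: abs_mult mult_left_le)
    qed
    have bc: "box d c r \<subseteq> unit_cube d"
    proof
      fix y assume y: "y \<in> box d c r"
      have "0 \<le> y i \<and> y i \<le> 1" if "i < d" for i
      proof -
        have "\<bar>y i - c i\<bar> < t / 2" using y that by (simp add: box_def r_def)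
        then have "y i - c i < t / 2" "- (y i - c i) < t / 2" unfolding abs_less_iff by auto
        then show ?thesis using ci(1,2)[OF that] by linarith
      qed
      then show "y \<in> unit_cube d" using y by (simp add: box_def unit_cube_def)
    qed
    have close: "\<forall>i<d. \<bar>y i - x i\<bar> < \<epsilon>" if "y \<in> box d c r" for y
    proof (intro allI impI)
      fix i assume i: "i < d"
      have "\<bar>y i - c i\<bar> < t / 2" using that i by (simp add: box_def r_def)
      then show "\<bar>y i - x i\<bar> < \<epsilon>" using ci(3)[OF i] t by linarith
    qed
    define Fr where "Fr = (\<lambda>i. case i of (p, q) \<Rightarrow> R p q)"
    have cov: "box d c r \<subseteq> (\<Union>i\<in>set ps \<times> set qs. Fr i)"
    proof
      fix y assume y: "y \<in> box d c r"
      obtain p where p: "p \<in> set ps" "mx d ps y = aff d p y" using mx_attained[OF ne(1)] by blast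
      obtain q where q: "q \<in> set qs" "mx d qs y = aff d q y" using mx_attained[OF ne(2)] by blast
      have "y \<in> R p q" unfolding R_def using p(2) q(2) mx_ge[of _ ps d y] mx_ge[of _ qs d y]
        by (simp del: prod.collapse)
      then show "y \<in> (\<Union>i\<in>set ps \<times> set qs. Fr i)" using p q unfolding Fr_def by auto
    qed
    have fin: "finite (set ps \<times> set qs)" by simp
    have bI: "\<forall>i\<in>set ps \<times> set qs. bclosed d (Fr i)" using bcl by (auto simp: Fr_def)
    obtain i c' r' where i: "i \<in> set ps \<times> set qs" and c': "0 < r'" "box d c' r' \<subseteq> Fr i"
      "box d c' r' \<subseteq> box d c r"
      using cover[OF fin r cov bI] by blast
    obtain p q where pq: "i = (p, q)" by (cases i)
    have pq': "p \<in> set ps" "q \<in> set qs" using i pq by auto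
    define u where "u = pdiff p q"
    have bc': "box d c' r' \<subseteq> unit_cube d" using c'(3) bc by blast
    have eq: "\<forall>z\<in>box d c' r'. f z = aff d u z"
    proof
      fix z assume z: "z \<in> box d c' r'"
      then have zR: "z \<in> R p q" using c'(2) pq by (auto simp: Fr_def)
      have "mx d ps z = aff d p z" using zR pq'(1) unfolding R_def by (intro mx_eq) auto
      moreover have "mx d qs z = aff d q z" using zR pq'(2) unfolding R_def by (intro mx_eq) auto
      ultimately show "f z = aff d u z" using eqf bc' z by (auto simp: u_def aff_pdiff)
    qed
    define y0 where "y0 = (\<lambda>i. if i < d then c' i else 0)"
    have y0b: "y0 \<in> box d c' r'" unfolding y0_def by (rule box_center[OF c'(1)])
    have y0c: "y0 \<in> unit_cube d" using y0b bc' by blast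
    have uV: "u \<in> V"
      unfolding V_def
    proof (intro CollectI conjI ballI)
      show "u \<in> (\<lambda>(p, q). pdiff p q) ` (set ps \<times> set qs)" using pq' by (auto simp: u_def)
      fix z assume "z \<in> unit_cube d"
      moreover have "\<forall>i<d. y0 i = c' i" by (simp add: y0_def)
      ultimately show "aff d u z \<le> f z"
        using support[OF conv y0c _ c'(1) bc' eq] by blast
    qed
    have cl: "\<forall>i<d. \<bar>y0 i - x i\<bar> < \<epsilon>" by (rule close[OF subsetD[OF c'(3) y0b]])
    have "aff d u y0 = f y0" using eq y0b by simp
    then show ?thesis using uV y0c cl by blast
  qed
  have z0: "(\<lambda>_. 0) \<in> unit_cube d" by (simp add: unit_cube_def)
  have "V \<noteq> {}" using C1[OF z0, of 1] by auto
  obtain rs where rs: "set rs = V" using finite_list[OF finV] by blast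
  have rsne: "rs \<noteq> []" using rs \<open>V \<noteq> {}\<close> by auto
  have "f x = mx d rs x" if x: "x \<in> unit_cube d" for x
  proof (rule antisym)
    show "mx d rs x \<le> f x" using rsne rs x by (intro mx_le) (auto simp: V_def)
    show "f x \<le> mx d rs x"
    proof (rule ccontr)
      assume "\<not> f x \<le> mx d rs x"
      then have g: "0 < f x - mx d rs x" by simp
      define \<Lambda> where "\<Lambda> = lipL d ps + lipL d qs + lipL d rs"
      have \<Lambda>: "0 \<le> \<Lambda>" unfolding \<Lambda>_def using lipL_nonneg by (simp add: add_nonneg_nonneg)
      define \<delta> where "\<delta> = (f x - mx d rs x) / (2 * \<Lambda> + 1)"
      have \<delta>: "0 < \<delta>" using g \<Lambda> by (simp add: \<delta>_def)
      have \<delta>2: "\<Lambda> * \<delta> < f x - mx d rs x"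
      proof -
        have "(2 * \<Lambda> + 1) * \<delta> = f x - mx d rs x" using \<Lambda> by (simp add: \<delta>_def)
        moreover have "0 \<le> \<Lambda> * \<delta>" using \<Lambda> \<delta> by simp
        ultimately show ?thesis using \<delta> by (simp add: distrib_right)
      qed
      obtain u y where u: "u \<in> V" and y: "y \<in> unit_cube d" "\<forall>i<d. \<bar>y i - x i\<bar> < \<delta>" "aff d u y = f y"
        using C1[OF x \<delta>] by blast
      have yd: "\<forall>i<d. \<bar>y i - x i\<bar> \<le> \<delta>" using y(2) by (simp add: less_imp_le)
      have "\<bar>mx d ps y - mx d ps x\<bar> \<le> lipL d ps * \<delta>" by (rule mx_lip[OF ne(1) yd]) (use \<delta> in simp)
      moreover have "\<bar>mx d qs y - mx d qs x\<bar> \<le> lipL d qs * \<delta>" by (rule mx_lip[OF ne(2) yd]) (use \<delta> in simp)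
      moreover have "\<bar>aff d u y - aff d u x\<bar> \<le> lip d u * \<delta>" by (rule aff_lip[OF yd])
      moreover have "lip d u * \<delta> \<le> lipL d rs * \<delta>" using lip_le_lipL[of u rs d] u rs \<delta> by (simp add: mult_right_mono)
      moreover have "aff d u x \<le> mx d rs x" using u rs by (intro mx_ge) simp
      moreover have "f x = mx d ps x - mx d qs x" "f y = mx d ps y - mx d qs y" using eqf x y(1) by auto
      ultimately have "f x - mx d rs x \<le> \<Lambda> * \<delta>" using y(3) unfolding \<Lambda>_def by (simp add: distrib_right)
      then show False using \<delta>2 by simp
    qed
  qed
  then show ?thesis using rsne by blast
qed


theorem theorem2:
  fixes d :: nat and f :: "(nat \<Rightarrow> real) \<Rightarrow> real"
  assumes "d \<ge> 1"
    and "\<exists>w n. relu_net_computes d w n f"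
  shows "(\<exists>N M ga gc ha hc. N \<ge> 1 \<and> M \<ge> 1 \<and>
           (\<forall>x\<in>unit_cube d. f x = max_affine d N ga gc x - max_affine d M ha hc x
                              \<and> max_affine d N ga gc x \<ge> 0 \<and> max_affine d M ha hc x \<ge> 0) \<and>
           relu_net_computes d (d + 3) (2 * (M + N)) f)
       \<and> (convex_on_cube d f \<longrightarrow>
           (\<exists>N ga gc. N \<ge> 1 \<and> (\<forall>x\<in>unit_cube d. f x = max_affine d N ga gc x) \<and>
              relu_net_computes d (d + 1) N f))"
proof -
  obtain w n where net: "relu_net_computes d w n f" using assms(2) by blast
  obtain ps qs where ne: "ps \<noteq> []" "qs \<noteq> []" and h: "\<forall>x\<in>unit_cube d. f x = mx d ps x - mx d qs x
       \<and> 0 \<le> mx d ps x \<and> 0 \<le> mx d qs x \<and> 0 \<le> f x"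
    using DC_pos[OF net] by blast
  have part1: "\<exists>N M ga gc ha hc. N \<ge> 1 \<and> M \<ge> 1 \<and>
           (\<forall>x\<in>unit_cube d. f x = max_affine d N ga gc x - max_affine d M ha hc x
                              \<and> max_affine d N ga gc x \<ge> 0 \<and> max_affine d M ha hc x \<ge> 0) \<and>
           relu_net_computes d (d + 3) (2 * (M + N)) f"
  proof (intro exI conjI ballI)
    let ?N = "length ps" and ?M = "length qs"
    show "1 \<le> ?N" "1 \<le> ?M" using ne by (auto simp: Suc_le_eq)
    fix x assume x: "x \<in> unit_cube d"
    show "f x = max_affine d ?N (\<lambda>\<alpha>. fst (ps ! (\<alpha> - 1))) (\<lambda>\<alpha>. snd (ps ! (\<alpha> - 1))) x
          - max_affine d ?M (\<lambda>\<alpha>. fst (qs ! (\<alpha> - 1))) (\<lambda>\<alpha>. snd (qs ! (\<alpha> - 1))) x"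
      "0 \<le> max_affine d ?N (\<lambda>\<alpha>. fst (ps ! (\<alpha> - 1))) (\<lambda>\<alpha>. snd (ps ! (\<alpha> - 1))) x"
      "0 \<le> max_affine d ?M (\<lambda>\<alpha>. fst (qs ! (\<alpha> - 1))) (\<lambda>\<alpha>. snd (qs ! (\<alpha> - 1))) x"
      using h x unfolding max_affine_list[OF ne(1)] max_affine_list[OF ne(2)] by simp_all
  next
    let ?N = "length ps" and ?M = "length qs"
    define "is" where "is = map (Pair (0::nat)) ps @ map (Pair 1) qs @ replicate (?N + ?M - 2) (0, hd ps)"
    define l where "l = (\<lambda>k::nat. if k = 0 then hd ps else hd qs)"
    have len: "length is + 2 = 2 * (?M + ?N)"
      using ne by (simp add: is_def) (cases ps; cases qs; simp)
    have ok: "\<forall>(k, p)\<in>set is. k < 2 \<and> d + k < d + 3" by (auto simp: is_def)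
    have hps: "hd ps \<in> set ps" "hd qs \<in> set qs" using ne by auto
    have s0: "set (runP is (\<lambda>k. [l k]) 0) = set ps"
      using hps by (auto simp: set_runP is_def l_def)
    have s1: "set (runP is (\<lambda>k. [l k]) 1) = set qs"
      using hps by (auto simp: set_runP is_def l_def)
    have "relu_net_computes d (d + 3) (length is + 2) f"
    proof (rule net_computes[OF _ ok])
      show "\<forall>x\<in>unit_cube d. f x = max 0 (mx d (runP is (\<lambda>k. [l k]) 0) x - mx d (runP is (\<lambda>k. [l k]) 1) x)"
        unfolding mx_set[OF s0] mx_set[OF s1] using h by (auto simp: max_def)
    qed simp
    then show "relu_net_computes d (d + 3) (2 * (?M + ?N)) f" using len by simp
  qed
  have part2: "\<exists>N ga gc. N \<ge> 1 \<and> (\<forall>x\<in>unit_cube d. f x = max_affine d N ga gc x) \<and>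
              relu_net_computes d (d + 1) N f" if conv: "convex_on_cube d f"
  proof -
    obtain rs where rs: "rs \<noteq> []" "\<forall>x\<in>unit_cube d. f x = mx d rs x"
      using convex_rep[OF ne _ conv] h by auto
    define rs' where "rs' = hd rs # hd rs # rs"
    have srs: "set rs' = set rs" using rs(1) by (auto simp: rs'_def)
    define "is" where "is = map (Pair (0::nat)) rs"
    define l where "l = (\<lambda>k::nat. if k = 0 then hd rs else ((\<lambda>_. 0, 0) :: piece))"
    have ok: "\<forall>(k, p)\<in>set is. k < 2 \<and> d + k < d + 1" by (auto simp: is_def)
    have hrs: "hd rs \<in> set rs" using rs(1) by auto
    have s0: "set (runP is (\<lambda>k. [l k]) 0) = set rs"
      using hrs by (auto simp: set_runP is_def l_def)
    have s1: "set (runP is (\<lambda>k. [l k]) 1) = {(\<lambda>_. 0, 0)}"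
      by (auto simp: set_runP is_def l_def)
    have z: "mx d (runP is (\<lambda>k. [l k]) 1) x = 0" for x
    proof -
      have s1': "set (runP is (\<lambda>k. [l k]) 1) = set [((\<lambda>_. 0, 0) :: piece)]" using s1 by simp
      show ?thesis unfolding mx_set[OF s1'] by (simp add: mx_single aff_def)
    qed
    have "relu_net_computes d (d + 1) (length is + 2) f"
    proof (rule net_computes[OF _ ok])
      show "\<forall>x\<in>unit_cube d. f x = max 0 (mx d (runP is (\<lambda>k. [l k]) 0) x - mx d (runP is (\<lambda>k. [l k]) 1) x)"
        unfolding mx_set[OF s0] z using h rs(2) by (auto simp: max_def)
    qed simp
    moreover have "length is + 2 = length rs'" by (simp add: is_def rs'_def)
    ultimately have net': "relu_net_computes d (d + 1) (length rs') f" by simp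
    have ma: "max_affine d (length rs') (\<lambda>\<alpha>. fst (rs' ! (\<alpha> - 1))) (\<lambda>\<alpha>. snd (rs' ! (\<alpha> - 1))) x = mx d rs x" for x
    proof -
      have "max_affine d (length rs') (\<lambda>\<alpha>. fst (rs' ! (\<alpha> - 1))) (\<lambda>\<alpha>. snd (rs' ! (\<alpha> - 1))) x = mx d rs' x"
        by (rule max_affine_list) (simp add: rs'_def)
      also have "\<dots> = mx d rs x" by (rule mx_set[OF srs])
      finally show ?thesis .
    qed
    show ?thesis
    proof (intro exI conjI ballI)
      show "1 \<le> length rs'" by (simp add: rs'_def)
      show "relu_net_computes d (d + 1) (length rs') f" by (rule net')
      fix x assume "x \<in> unit_cube d"
      then show "f x = max_affine d (length rs') (\<lambda>\<alpha>. fst (rs' ! (\<alpha> - 1))) (\<lambda>\<alpha>. snd (rs' ! (\<alpha> - 1))) x"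
        unfolding ma using rs(2) by simp
    qed
  qed
  show ?thesis using part1 part2 by blast
qed

end
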